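(* Let $F$ be a smooth distribution supported on $[0,1]$ whose CDF is convex (equivalently, whose PDF $f$ is non-decreasing). Then $\tilde{O}(\epsilon^{-1/2})$ oracle queries to $F$ and $f$ suffice to learn $F$ within Lévy distance $O(\epsilon)$.
   Context: A distribution is smooth if it has no point masses and a PDF $f$ of class $C^1$. Oracle query model: an algorithm adaptively chooses points $x$ and receives the exact values $F(x)$ and/or $f(x)$; after its queries it must output a distribution $\hat F$ with $\mathrm{L\acute{e}vy}(F,\hat F)$ at most the target accuracy, where $\mathrm{L\acute{e}vy}(F,G)=\inf\{\epsilon: F(v-\epsilon)-\epsilon\le G(v)\le F(v+\epsilon)+\epsilon\ \forall v\}$. $\tilde{O}$ hides polylog$(1/\epsilon)$ factors. *)

theory Defs
  imports "HOL-Analysis.Analysis"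
begin

definition smooth_dist_01 :: "(real \<Rightarrow> real) \<Rightarrow> (real \<Rightarrow> real) \<Rightarrow> bool" where
  "smooth_dist_01 F f \<longleftrightarrow>
     (\<forall>x. 0 \<le> f x) \<and>
     (\<forall>x. x \<notin> {0..1} \<longrightarrow> f x = 0) \<and>
     (\<exists>f'. (\<forall>x\<in>{0..1}. (f has_real_derivative f' x) (at x within {0..1}))
           \<and> continuous_on {0..1} f') \<and>
     (\<forall>x. x < 0 \<longrightarrow> F x = 0) \<and>
     (\<forall>x. 1 < x \<longrightarrow> F x = 1) \<and>
     (\<forall>x\<in>{0..1}. (f has_integral F x) {0..x}) \<and>
     F 1 = 1"

definition is_cdf :: "(real \<Rightarrow> real) \<Rightarrow> bool" where
  "is_cdf G \<longleftrightarrow> mono G \<and> (G \<longlongrightarrow> 0) at_bot \<and> (G \<longlongrightarrow> 1) at_top \<and>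
     (\<forall>x. continuous (at_right x) G)"

definition levy :: "(real \<Rightarrow> real) \<Rightarrow> (real \<Rightarrow> real) \<Rightarrow> real" where
  "levy F G = Inf {e. \<forall>v. F (v - e) - e \<le> G v \<and> G v \<le> F (v + e) + e}"

text \<open>Deterministic adaptive oracle algorithm: Q maps the history of
  (query point, F value, f value) triples to the next query point.
  run Q F f n is the history after n queries.\<close>
fun run :: "((real \<times> real \<times> real) list \<Rightarrow> real) \<Rightarrow> (real \<Rightarrow> real) \<Rightarrow> (real \<Rightarrow> real)
             \<Rightarrow> nat \<Rightarrow> (real \<times> real \<times> real) list" where
  "run Q F f 0 = []"
| "run Q F f (Suc n) = (let h = run Q F f n; x = Q h in h @ [(x, F x, f x)])"

end

theory Submission
  imports Defs
begin


lemma tangent_Icc: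
  fixes F :: "real \<Rightarrow> real"
  assumes convex: "convex_on {a..b} F"
  assumes c: "c \<in> {a..b}" and x: "x \<in> {a..b}"
  assumes deriv: "(F has_field_derivative d) (at c within {a..b})"
  shows "F x - F c \<ge> d * (x - c)"
proof -
  have L: "((\<lambda>y. (F y - F c) / (y - c)) \<longlongrightarrow> d) (at c within {a..b})"
    using deriv by (simp add: has_field_derivative_iff)
  show ?thesis
  proof (cases x c rule: linorder_cases)
  assume xc: "x > c"
  let ?A' = "{c<..b}"
  have cl: "c \<in> closure ?A'" using xc x by (simp add: closure_greaterThanAtMost)
  have "at c within ?A' \<noteq> bot"
    using cl by (simp add: at_within_eq_bot_iff)
  moreover have "((\<lambda>y. (F y - F c) / (y - c)) \<longlongrightarrow> d) (at c within ?A')"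
  proof -
    have "?A' \<subseteq> {a..b}" using c by auto
    thus ?thesis by (rule tendsto_mono[OF at_le L])
  qed
  moreover have "eventually (\<lambda>y. (F y - F c) / (y - c) \<le> (F x - F c) / (x - c)) (at_right c)"
    using eventually_at_right_real[OF xc]
  proof eventually_elim
    fix y assume y: "y \<in> {c<..<x}"
    have sub: "{c..x} \<subseteq> {a..b}" using c x by auto
    have "F y \<le> (F x - F c) / (x - c) * (y - c) + F c"
      using convex_onD_Icc'[OF convex_on_subset[OF convex sub], of y] y by simp
    hence "F y - F c \<le> (F x - F c) / (x - c) * (y - c)" by simp
    thus "(F y - F c) / (y - c) \<le> (F x - F c) / (x - c)" using y xc by (simp add: field_split_simps)
  qed
  hence "eventually (\<lambda>y. (F y - F c) / (y - c) \<le> (F x - F c) / (x - c)) (at c within ?A')"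
    by (rule filter_leD[OF at_le, rotated]) auto
  ultimately have "d \<le> (F x - F c) / (x - c)" by (metis tendsto_upperbound)
  thus ?thesis using xc by (simp add: field_simps)
next
  assume xc: "x < c"
  let ?A' = "{a..<c}"
  have cl: "c \<in> closure ?A'" using xc x by (simp add: closure_atLeastLessThan)
  have "at c within ?A' \<noteq> bot"
    using cl by (simp add: at_within_eq_bot_iff)
  moreover have "((\<lambda>y. (F y - F c) / (y - c)) \<longlongrightarrow> d) (at c within ?A')"
  proof -
    have "?A' \<subseteq> {a..b}" using c by auto
    thus ?thesis by (rule tendsto_mono[OF at_le L])
  qed
  moreover have "eventually (\<lambda>y. (F y - F c) / (y - c) \<ge> (F x - F c) / (x - c)) (at_left c)"
    using eventually_at_left_real[OF xc]
  proof eventually_elim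
    fix y assume y: "y \<in> {x<..<c}"
    have sub: "{x..c} \<subseteq> {a..b}" using c x by auto
    have "F y \<le> (F x - F c) / (c - x) * (c - y) + F c"
      using convex_onD_Icc''[OF convex_on_subset[OF convex sub], of y] y by simp
    hence "F y - F c \<le> (F x - F c) * ((c - y) / (c - x))" by simp
    also have "(c - y) / (c - x) = (y - c) / (x - c)" using y xc by (simp add: field_simps)
    finally show "(F y - F c) / (y - c) \<ge> (F x - F c) / (x - c)" using y xc
      by (simp add: field_split_simps)
  qed
  hence "eventually (\<lambda>y. (F y - F c) / (y - c) \<ge> (F x - F c) / (x - c)) (at c within ?A')"
    by (rule filter_leD[OF at_le, rotated]) auto
  ultimately have "d \<ge> (F x - F c) / (x - c)" by (metis tendsto_lowerbound)
  thus ?thesis using xc by (simp add: field_simps)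
qed simp
qed
locale cls =
  fixes F f :: "real \<Rightarrow> real"
  assumes sd: "smooth_dist_01 F f" and cv: "convex_on {0..1} F"
begin

lemma f_nonneg: "0 \<le> f x" using sd by (simp add: smooth_dist_01_def)

lemma f_cont: "continuous_on {0..1} f"
proof -
  obtain f' where "\<forall>x\<in>{0..1}. (f has_real_derivative f' x) (at x within {0..1})"
    using sd unfolding smooth_dist_01_def by blast
  thus ?thesis unfolding continuous_on_eq_continuous_within
    using DERIV_continuous by metis
qed

lemma F_eq: "x \<in> {0..1} \<Longrightarrow> F x = integral {0..x} f"
  using sd unfolding smooth_dist_01_def by (metis integral_unique)

lemma F_deriv: assumes "x \<in> {0..1}" shows "(F has_real_derivative f x) (at x within {0..1})"
proof -
  have "((\<lambda>u. integral {0..u} f) has_real_derivative f x) (at x within {0..1})"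
    by (rule integral_has_real_derivative[OF f_cont assms])
  thus ?thesis
    by (rule has_field_derivative_transform_within[where d=1]) (use assms F_eq in auto)
qed

lemma tangent: "c \<in> {0..1} \<Longrightarrow> x \<in> {0..1} \<Longrightarrow> F c + f c * (x - c) \<le> F x"
  using tangent_Icc[OF cv _ _ F_deriv, of c x] by (simp add: algebra_simps)

lemma f_mono: assumes "0 \<le> x" "x \<le> y" "y \<le> 1" shows "f x \<le> f y"
proof (cases "x = y")
  case False
  have "F x + f x * (y - x) \<le> F y" "F y + f y * (x - y) \<le> F x" using assms tangent by auto
  hence "(f x - f y) * (y - x) \<le> 0" by (simp add: algebra_simps)
  thus ?thesis using False assms by (simp add: mult_le_0_iff)
qed simp

lemma F0: "F 0 = 0" using F_eq[of 0] by simp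
lemma F1: "F 1 = 1" using sd by (simp add: smooth_dist_01_def)

lemma F_nonneg: "0 \<le> F x"
proof -
  consider "x < 0" | "x \<in> {0..1}" | "1 < x" by fastforce
  thus ?thesis
  proof cases
    case 1 thus ?thesis using sd by (simp add: smooth_dist_01_def)
  next
    case 2 thus ?thesis using tangent[of 0 x] F0 f_nonneg[of 0] by (auto intro: order_trans[OF mult_nonneg_nonneg])
  next
    case 3 thus ?thesis using sd by (simp add: smooth_dist_01_def)
  qed
qed

lemma F_mono01: "0 \<le> x \<Longrightarrow> x \<le> y \<Longrightarrow> y \<le> 1 \<Longrightarrow> F x \<le> F y"
proof -
  assume a: "0 \<le> x" "x \<le> y" "y \<le> 1"
  have "F x + f x * (y - x) \<le> F y" using tangent[of x y] a by simp
  moreover have "0 \<le> f x * (y - x)" using f_nonneg[of x] a by simp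
  ultimately show ?thesis by linarith
qed

lemma F_le1: "F x \<le> 1"
proof -
  consider "x < 0" | "x \<in> {0..1}" | "1 < x" by fastforce
  thus ?thesis
  proof cases
    case 1 thus ?thesis using sd by (simp add: smooth_dist_01_def)
  next
    case 2 thus ?thesis using F_mono01[of x 1] F1 by auto
  next
    case 3 thus ?thesis using sd by (simp add: smooth_dist_01_def)
  qed
qed

lemma F_out: "x < 0 \<Longrightarrow> F x = 0" "1 < x \<Longrightarrow> F x = 1"
  using sd by (auto simp: smooth_dist_01_def)

lemma F_mono: assumes "x \<le> y" shows "F x \<le> F y"
proof -
  have a: "F x = 0" if "x < 0" using F_out that by auto
  have b: "F y = 1" if "1 < y" using F_out that by auto
  show ?thesis
  proof (cases "x < 0")
    case True thus ?thesis using a F_nonneg by simp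
  next
    case False
    show ?thesis
    proof (cases "1 < y")
      case True thus ?thesis using b F_le1 by simp
    next
      case False thus ?thesis using \<open>\<not> x < 0\<close> F_mono01 assms by simp
    qed
  qed
qed

lemma f_bound: assumes "0 \<le> a" "a < 1" shows "f a * (1 - a) \<le> 1"
  using tangent[of a 1] assms F1 F_nonneg[of a] by auto

end



fun envl :: "(real \<times> real \<times> real) list \<Rightarrow> real \<Rightarrow> real" where
  "envl [] v = 0"
| "envl (p#ps) v = (if 0 \<le> fst p \<and> fst p \<le> 1
      then max (fst (snd p) + max 0 (snd (snd p)) * (v - fst p)) (envl ps v) else envl ps v)"

definition Gout :: "(real \<times> real \<times> real) list \<Rightarrow> real \<Rightarrow> real" where
  "Gout h v = (if v < 0 then 0 else if 1 \<le> v then 1 else min 1 (envl h v))"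

lemma envl_nonneg: "0 \<le> envl h v"
  by (induction h) auto

lemma envl_mono: "v \<le> w \<Longrightarrow> envl h v \<le> envl h w"
proof (induction h)
  case (Cons p ps)
  have "fst (snd p) + max 0 (snd (snd p)) * (v - fst p) \<le> fst (snd p) + max 0 (snd (snd p)) * (w - fst p)"
    using Cons.prems by (simp add: mult_left_mono)
  thus ?case using Cons by (auto simp: max_def)
qed simp

lemma envl_cont: "isCont (envl h) x"
proof (induction h)
  case (Cons p ps)
  show ?case
  proof (cases "0 \<le> fst p \<and> fst p \<le> 1")
    case True
    have "envl (p#ps) = (\<lambda>v. max (fst (snd p) + max 0 (snd (snd p)) * (v - fst p)) (envl ps v))"
      using True by (simp add: fun_eq_iff)
    thus ?thesis using Cons.IH by (auto intro!: continuous_intros)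
  next
    case False
    have "envl (p#ps) = envl ps" using False by (auto simp: fun_eq_iff)
    thus ?thesis using Cons.IH by simp
  qed
qed simp

lemma envl_ge: "p \<in> set h \<Longrightarrow> 0 \<le> fst p \<Longrightarrow> fst p \<le> 1 \<Longrightarrow>
   fst (snd p) + max 0 (snd (snd p)) * (v - fst p) \<le> envl h v"
  by (induction h) (auto simp: le_max_iff_disj)

lemma envl_le: "(\<And>p. p \<in> set h \<Longrightarrow> 0 \<le> fst p \<Longrightarrow> fst p \<le> 1 \<Longrightarrow>
   fst (snd p) + max 0 (snd (snd p)) * (v - fst p) \<le> M) \<Longrightarrow> 0 \<le> M \<Longrightarrow> envl h v \<le> M"
  by (induction h) auto

lemma Gout_mono: "mono (Gout h)"
  unfolding mono_def Gout_def using envl_nonneg envl_mono by (smt (verit))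

lemma Gout_cdf: "is_cdf (Gout h)"
  unfolding is_cdf_def
proof (intro conjI allI)
  show "mono (Gout h)" by (rule Gout_mono)
  have "eventually (\<lambda>x. Gout h x = 0) at_bot"
    unfolding eventually_at_bot_linorder by (rule exI[of _ "-1"]) (auto simp: Gout_def)
  thus "(Gout h \<longlongrightarrow> 0) at_bot" by (rule tendsto_eventually)
  have "eventually (\<lambda>x. Gout h x = 1) at_top"
    unfolding eventually_at_top_linorder by (rule exI[of _ "1"]) (auto simp: Gout_def)
  thus "(Gout h \<longlongrightarrow> 1) at_top" by (rule tendsto_eventually)
  fix x :: real
  show "continuous (at_right x) (Gout h)"
    unfolding continuous_within
  proof (cases "x < 0")
    case True
    have "eventually (\<lambda>y. Gout h y = Gout h x) (at_right x)"
      using eventually_at_right_real[OF True] by eventually_elim (use True in \<open>auto simp: Gout_def\<close>)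
    thus "(Gout h \<longlongrightarrow> Gout h x) (at_right x)"
      by (rule tendsto_eventually)
  next
    case False
    show "(Gout h \<longlongrightarrow> Gout h x) (at_right x)"
    proof (cases "1 \<le> x")
      case True
      have "eventually (\<lambda>y. Gout h y = Gout h x) (at_right x)"
        using eventually_at_right_less[of x] by eventually_elim (use True in \<open>auto simp: Gout_def\<close>)
      thus ?thesis by (rule tendsto_eventually)
    next
      case False2: False
      have x1: "x < 1" using False2 by simp
      have c: "((\<lambda>y. min 1 (envl h y)) \<longlongrightarrow> min 1 (envl h x)) (at_right x)"
        using envl_cont[where h=h and x=x] by (intro tendsto_min tendsto_const)
          (simp add: isCont_def filterlim_at_split)
      have "eventually (\<lambda>y. min 1 (envl h y) = Gout h y) (at_right x)"
        using eventually_at_right_real[OF x1] by eventually_elim (use False in \<open>auto simp: Gout_def\<close>)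
      moreover have "min 1 (envl h x) = Gout h x" using False False2 by (simp add: Gout_def)
      ultimately show ?thesis using c by (metis (mono_tags) Lim_transform_eventually)
    qed
  qed
qed

context cls begin

lemma levy_ok:
  assumes e: "0 < e"
    and ex: "\<forall>p\<in>set h. fst (snd p) = F (fst p) \<and> snd (snd p) = f (fst p)"
    and rng: "\<forall>p\<in>set h. 0 \<le> fst p \<and> fst p \<le> 1"
    and cov: "\<forall>v. 0 \<le> v \<and> v < 1 \<longrightarrow> (\<exists>p\<in>set h. 0 \<le> fst p \<and> fst p \<le> v \<and>
                 (v - fst p \<le> e \<or> (f v - f (fst p)) * (v - fst p) \<le> e))"
  shows "levy F (Gout h) \<le> e"
proof -
  let ?S = "{e. \<forall>v. F (v - e) - e \<le> Gout h v \<and> Gout h v \<le> F (v + e) + e}"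
  have bdd: "bdd_below ?S"
  proof (rule bdd_belowI[of _ 0])
    fix x assume "x \<in> ?S"
    hence "F ((2 + \<bar>x\<bar>) - x) - x \<le> Gout h (2 + \<bar>x\<bar>)" "Gout h (2 + \<bar>x\<bar>) \<le> F ((2 + \<bar>x\<bar>) + x) + x"
      by auto
    moreover have "F ((2 + \<bar>x\<bar>) - x) = 1" "F ((2 + \<bar>x\<bar>) + x) = 1" by (auto intro!: F_out)
    ultimately show "0 \<le> x" by linarith
  qed
  have "e \<in> ?S"
  proof (safe)
    fix v :: real
    show "F (v - e) - e \<le> Gout h v"
    proof (cases "v < 0")
      case True thus ?thesis using F_out(1)[of "v - e"] e envl_nonneg by (simp add: Gout_def)
    next
      case False
      show ?thesis
      proof (cases "1 \<le> v")
        case True thus ?thesis using F_le1[of "v - e"] e by (simp add: Gout_def)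
      next
        case False2: False
        have "\<exists>p\<in>set h. 0 \<le> fst p \<and> fst p \<le> v \<and>
                 (v - fst p \<le> e \<or> (f v - f (fst p)) * (v - fst p) \<le> e)"
          using cov False False2 by simp
        then obtain p where p: "p \<in> set h" "0 \<le> fst p" "fst p \<le> v"
          and pc: "v - fst p \<le> e \<or> (f v - f (fst p)) * (v - fst p) \<le> e"
          by blast
        obtain x y z where pxyz: "p = (x, y, z)" by (cases p) auto
        have y: "y = F x" and z: "z = f x" using ex p pxyz by auto
        have x01: "0 \<le> x" "x \<le> 1" using p pxyz False2 by auto
        have T: "F x + f x * (v - x) \<le> envl h v"
          using envl_ge[OF p(1), of v] p pxyz y z f_nonneg[of x] x01 by simp
        have "F (v - e) - e \<le> F x + f x * (v - x)"
          using pc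
        proof
          assume "v - fst p \<le> e"
          hence "F (v - e) \<le> F x" using F_mono pxyz by auto
          moreover have "0 \<le> f x * (v - x)" using f_nonneg[of x] p pxyz by simp
          ultimately show ?thesis using e by linarith
        next
          assume a: "(f v - f (fst p)) * (v - fst p) \<le> e"
          have "F v + f v * (x - v) \<le> F x" using tangent[of v x] x01 False False2 by simp
          hence "F v - (F x + f x * (v - x)) \<le> (f v - f x) * (v - x)" by (simp add: algebra_simps)
          moreover have "F (v - e) \<le> F v" using F_mono e by simp
          ultimately show ?thesis using a pxyz by simp
        qed
        moreover have "F (v - e) - e \<le> 1" using F_le1[of "v-e"] e by simp
        ultimately show ?thesis using T False False2 by (simp add: Gout_def)
      qed
    qed
    show "Gout h v \<le> F (v + e) + e"
    proof (cases "v < 0")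
      case True thus ?thesis using F_nonneg[of "v + e"] e by (simp add: Gout_def)
    next
      case False
      show ?thesis
      proof (cases "1 \<le> v")
        case True thus ?thesis using F_out(2)[of "v + e"] e by (simp add: Gout_def)
      next
        case False2: False
        have "envl h v \<le> F v"
        proof (rule envl_le)
          fix p assume p: "p \<in> set h" "0 \<le> fst p" "fst p \<le> 1"
          obtain x y z where pxyz: "p = (x, y, z)" by (cases p) auto
          have y: "y = F x" and z: "z = f x" using ex p pxyz by auto
          show "fst (snd p) + max 0 (snd (snd p)) * (v - fst p) \<le> F v"
            using tangent[of x v] p pxyz y z f_nonneg[of x] False False2 by simp
        qed (rule F_nonneg)
        moreover have "F v \<le> F (v + e)" using F_mono e by simp
        ultimately show ?thesis using False False2 e by (simp add: Gout_def)
      qed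
    qed
  qed
  hence "Inf ?S \<le> e" using bdd by (rule cInf_lower)
  thus ?thesis by (simp add: levy_def)
qed

end



datatype st = Init | Probe real real | Bis real real real real real nat

definition qry :: "real \<Rightarrow> real \<Rightarrow> st \<Rightarrow> real" where
  "qry e r s = (case s of Init \<Rightarrow> 0
     | Probe a fa \<Rightarrow> (if 1 - e \<le> a then a else min (a + r / (1 + fa)) 1)
     | Bis a fa lo hi fhi k \<Rightarrow> (lo + hi) / 2)"

definition tr :: "real \<Rightarrow> real \<Rightarrow> nat \<Rightarrow> st \<Rightarrow> real \<Rightarrow> real \<Rightarrow> st" where
  "tr e r B s x fx = (case s of Init \<Rightarrow> Probe x fx
     | Probe a fa \<Rightarrow> (if 1 - e \<le> a then Probe a fa
          else if fx \<le> fa + r * (1 + fa) then Probe x fx else Bis a fa a x fx B)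
     | Bis a fa lo hi fhi k \<Rightarrow> (if fx \<le> fa + r * (1 + fa)
          then (if k \<le> 1 then Probe hi fhi else Bis a fa x hi fhi (k - 1))
          else (if k \<le> 1 then Probe x fx else Bis a fa lo x fx (k - 1))))"

definition stof :: "real \<Rightarrow> real \<Rightarrow> nat \<Rightarrow> (real \<times> real \<times> real) list \<Rightarrow> st" where
  "stof e r B h = foldl (\<lambda>s p. tr e r B s (fst p) (snd (snd p))) Init h"

definition QQ :: "real \<Rightarrow> real \<Rightarrow> nat \<Rightarrow> (real \<times> real \<times> real) list \<Rightarrow> real" where
  "QQ e r B h = qry e r (stof e r B h)"

lemma run_exact: "p \<in> set (run Q F f n) \<Longrightarrow> fst (snd p) = F (fst p) \<and> snd (snd p) = f (fst p)"
  by (induction n) (auto simp: Let_def)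

lemma run_Suc: "run (QQ e r B) F f (Suc n) =
   run (QQ e r B) F f n @ [(qry e r (stof e r B (run (QQ e r B) F f n)),
      F (qry e r (stof e r B (run (QQ e r B) F f n))), f (qry e r (stof e r B (run (QQ e r B) F f n))))]"
  by (simp add: Let_def QQ_def)

lemma stof_snoc: "stof e r B (h @ [(x, y, z)]) = tr e r B (stof e r B h) x z"
  by (simp add: stof_def)

locale alg = cls +
  fixes e r :: real and B :: nat
  assumes e: "0 < e" "e < 1" and r: "r = sqrt e" and B: "1 \<le> B" "1 / e \<le> 2 ^ B"
begin

lemma r_pos: "0 < r" using e r by simp
lemma r_le1: "r \<le> 1" using e r by simp
lemma rr: "r * r = e" using e r by simp
lemma e_le_r: "e \<le> r" using rr r_le1 r_pos by (metis mult_left_le mult.commute less_imp_le)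
lemma lnr: "0 < ln (1 + r)" using r_pos by simp

definition Kn :: "(real \<times> real \<times> real) list \<Rightarrow> real \<Rightarrow> bool" where
  "Kn h x = (\<exists>p\<in>set h. fst p = x)"
definition Cov :: "(real \<times> real \<times> real) list \<Rightarrow> real \<Rightarrow> bool" where
  "Cov h v = (\<exists>p\<in>set h. 0 \<le> fst p \<and> fst p \<le> v \<and> (v - fst p \<le> e \<or> (f v - f (fst p)) * (v - fst p) \<le> e))"
definition Rng :: "(real \<times> real \<times> real) list \<Rightarrow> bool" where
  "Rng h = (\<forall>p\<in>set h. 0 \<le> fst p \<and> fst p \<le> 1)"
definition th :: "real \<Rightarrow> real" where "th fa = fa + r * (1 + fa)"

definition Inv :: "st \<Rightarrow> (real \<times> real \<times> real) list \<Rightarrow> bool" where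
  "Inv s h = (Rng h \<and> (case s of Init \<Rightarrow> h = []
     | Probe a fa \<Rightarrow> 0 \<le> a \<and> a \<le> 1 \<and> fa = f a \<and> Kn h a \<and> (\<forall>v. 0 \<le> v \<and> v < a \<longrightarrow> Cov h v)
     | Bis a fa lo hi fhi k \<Rightarrow> 0 \<le> a \<and> a \<le> lo \<and> lo < hi \<and> hi \<le> 1 \<and> a < 1 - e \<and> fa = f a
        \<and> f lo \<le> th fa \<and> fhi = f hi \<and> th fa < fhi \<and> Kn h a \<and> Kn h lo \<and> Kn h hi
        \<and> hi - a \<le> r / (1 + fa) \<and> hi - lo \<le> r / 2 ^ (B - k) \<and> 1 \<le> k \<and> k \<le> B
        \<and> (\<forall>v. 0 \<le> v \<and> v < a \<longrightarrow> Cov h v)))"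

definition Phi :: "real \<Rightarrow> real" where
  "Phi a = (a + F a) / r + ln (1 + f a) / ln (1 + r)"

definition Psi :: "st \<Rightarrow> real" where
  "Psi s = (case s of Init \<Rightarrow> 0 | Probe a fa \<Rightarrow> (real B + 1) * Phi a
     | Bis a fa lo hi fhi k \<Rightarrow> (real B + 1) * Phi a + (real B + 1 - real k))"

definition dn :: "st \<Rightarrow> bool" where
  "dn s = (case s of Probe a fa \<Rightarrow> 1 - e \<le> a | _ \<Rightarrow> False)"

definition PB :: real where "PB = 2 / r + ln (1 + 1 / e) / ln (1 + r)"

lemma Kn_app: "Kn h x \<Longrightarrow> Kn (h @ q) x" by (auto simp: Kn_def)
lemma Cov_app: "Cov h v \<Longrightarrow> Cov (h @ q) v" by (auto simp: Cov_def)
lemma Kn_new: "Kn (h @ [(x, y, z)]) x" by (auto simp: Kn_def)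

lemma cov_by:
  assumes "Kn h a" "0 \<le> a" "a \<le> v" "v \<le> 1" "v - a \<le> r / (1 + f a)" "f v \<le> th (f a)"
  shows "Cov h v"
proof -
  have fa0: "0 \<le> f a" by (rule f_nonneg)
  have d1: "0 \<le> f v - f a" using f_mono assms by simp
  have d2: "f v - f a \<le> r * (1 + f a)" using assms(6) by (simp add: th_def)
  have "(f v - f a) * (v - a) \<le> (r * (1 + f a)) * (r / (1 + f a))"
    using d1 d2 assms by (intro mult_mono) auto
  also have "\<dots> = r * r" using fa0 by (simp add: field_simps)
  finally have "(f v - f a) * (v - a) \<le> e" using rr by simp
  thus ?thesis using assms unfolding Cov_def Kn_def by auto
qed

lemma cov_near:
  assumes "Kn h a" "0 \<le> a" "a \<le> v" "v - a \<le> e"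
  shows "Cov h v"
  using assms unfolding Cov_def Kn_def by auto

lemma Phi_wide:
  assumes "0 \<le> a" "b = a + r / (1 + f a)" "b \<le> 1"
  shows "Phi a + 1 \<le> Phi b"
proof -
  have fa0: "0 \<le> f a" by (rule f_nonneg)
  have ab: "a \<le> b" using assms r_pos fa0 by simp
  have "F a + f a * (b - a) \<le> F b" using tangent[of a b] assms ab by simp
  moreover have "(b - a) + f a * (b - a) = r" using assms fa0 by (simp add: field_simps)
  ultimately have "a + F a + r \<le> b + F b" by linarith
  hence "(a + F a + r) / r \<le> (b + F b) / r" using r_pos by (simp add: divide_right_mono)
  moreover have "(a + F a + r) / r = (a + F a) / r + 1" using r_pos by (simp add: add_divide_distrib)
  ultimately have 1: "(a + F a) / r + 1 \<le> (b + F b) / r" by simp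
  have "f a \<le> f b" using f_mono assms ab by simp
  hence "ln (1 + f a) \<le> ln (1 + f b)" using fa0 by simp
  hence "ln (1 + f a) / ln (1 + r) \<le> ln (1 + f b) / ln (1 + r)" using lnr by (simp add: divide_right_mono)
  thus ?thesis using 1 unfolding Phi_def by linarith
qed

lemma Phi_narrow:
  assumes "0 \<le> a" "a \<le> b" "b \<le> 1" "th (f a) < f b"
  shows "Phi a + 1 \<le> Phi b"
proof -
  have fa0: "0 \<le> f a" by (rule f_nonneg)
  have "F a \<le> F b" using F_mono assms by simp
  hence 1: "(a + F a) / r \<le> (b + F b) / r" using r_pos assms by (simp add: divide_right_mono)
  have "(1 + r) * (1 + f a) < 1 + f b" using assms(4) by (simp add: th_def algebra_simps)
  moreover have p1: "0 < (1 + r) * (1 + f a)" using fa0 r_pos by simp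
  ultimately have "ln ((1 + r) * (1 + f a)) \<le> ln (1 + f b)" using ln_le_cancel_iff[OF p1, of "1 + f b"] by simp
  hence "ln (1 + r) + ln (1 + f a) \<le> ln (1 + f b)" using fa0 r_pos by (simp add: ln_mult)
  hence "(ln (1 + f a) + ln (1 + r)) / ln (1 + r) \<le> ln (1 + f b) / ln (1 + r)" using lnr
    by (simp add: divide_right_mono)
  moreover have "(ln (1 + f a) + ln (1 + r)) / ln (1 + r) = ln (1 + f a) / ln (1 + r) + 1"
    using lnr by (simp add: add_divide_distrib)
  ultimately have "ln (1 + f a) / ln (1 + r) + 1 \<le> ln (1 + f b) / ln (1 + r)" by simp
  thus ?thesis using 1 unfolding Phi_def by linarith
qed

lemma Phi_nonneg: assumes "0 \<le> a" shows "0 \<le> Phi a"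
proof -
  have "0 \<le> (a + F a) / r" using assms F_nonneg[of a] r_pos by simp
  moreover have "0 \<le> ln (1 + f a) / ln (1 + r)" using f_nonneg[of a] lnr by simp
  ultimately show ?thesis unfolding Phi_def by linarith
qed

lemma Phi_bound: assumes "0 \<le> a" "a < 1 - e" shows "Phi a \<le> PB"
proof -
  have "a + F a \<le> 2" using assms F_le1[of a] e by simp
  hence "(a + F a) / r \<le> 2 / r" using r_pos by (simp add: divide_right_mono)
  moreover have "f a \<le> 1 / e"
  proof -
    have "f a * (1 - a) \<le> 1" using f_bound assms e by simp
    moreover have "f a * e \<le> f a * (1 - a)" using assms f_nonneg[of a] by (simp add: mult_left_mono)
    ultimately show ?thesis using e by (simp add: field_simps)
  qed
  hence "ln (1 + f a) \<le> ln (1 + 1 / e)" using f_nonneg[of a] e by simp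
  hence "ln (1 + f a) / ln (1 + r) \<le> ln (1 + 1 / e) / ln (1 + r)" using lnr by (simp add: divide_right_mono)
  ultimately show ?thesis unfolding Phi_def PB_def by linarith
qed

end



context alg begin

lemma small: "r / 2 ^ B \<le> e"
proof -
  have "1 \<le> e * 2 ^ B" using B(2) e by (simp add: field_simps)
  hence "r \<le> e * 2 ^ B" using r_le1 by linarith
  thus ?thesis by (simp add: field_simps)
qed

lemma halve: "1 \<le> k \<Longrightarrow> k \<le> B \<Longrightarrow> r / 2 ^ (B - k) / 2 = r / 2 ^ (B - (k - 1))"
proof -
  assume "1 \<le> k" "k \<le> B"
  hence "B - (k - 1) = Suc (B - k)" by simp
  thus ?thesis by simp
qed

lemma step_Init:
  assumes I: "Inv Init h"
  defines "x \<equiv> qry e r Init"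
  defines "h' \<equiv> h @ [(x, F x, f x)]" and "s' \<equiv> tr e r B Init x (f x)"
  shows "Inv s' h' \<and> s' \<noteq> Init \<and> 0 \<le> Psi s'"
proof -
  have x: "x = 0" by (simp add: x_def qry_def)
  have h: "h = []" using I by (simp add: Inv_def)
  have s': "s' = Probe 0 (f 0)" by (simp add: s'_def tr_def x)
  have "Inv s' h'" unfolding s' Inv_def using Kn_new[of h 0 "F 0" "f 0"]
    by (auto simp: h'_def h x Rng_def)
  moreover have "0 \<le> Psi s'" unfolding s' Psi_def using Phi_nonneg[of 0] by simp
  ultimately show ?thesis using s' by simp
qed

lemma step_Probe:
  assumes I: "Inv (Probe a fa) h"
  defines "x \<equiv> qry e r (Probe a fa)"
  defines "h' \<equiv> h @ [(x, F x, f x)]" and "s' \<equiv> tr e r B (Probe a fa) x (f x)"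
  shows "Inv s' h' \<and> s' \<noteq> Init \<and> (dn (Probe a fa) \<longrightarrow> dn s') \<and>
         (\<not> dn (Probe a fa) \<longrightarrow> dn s' \<or> Psi (Probe a fa) + 1 \<le> Psi s')"
proof -
  from I have R: "Rng h" and a0: "0 \<le> a" and a1: "a \<le> 1" and fa: "fa = f a" and Ka: "Kn h a"
    and C: "\<forall>v. 0 \<le> v \<and> v < a \<longrightarrow> Cov h v"
    by (auto simp: Inv_def)
  have fa0: "0 \<le> fa" using fa f_nonneg by simp
  show ?thesis
  proof (cases "1 - e \<le> a")
    case True
    have x: "x = a" using True by (simp add: x_def qry_def)
    have s': "s' = Probe a fa" using True by (simp add: s'_def tr_def)
    have "Inv s' h'" unfolding s' Inv_def using R a0 a1 fa Ka C Kn_app Cov_app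
      by (auto simp: h'_def x Rng_def)
    thus ?thesis using True s' by (simp add: dn_def)
  next
    case False
    let ?w = "r / (1 + fa)"
    have w0: "0 < ?w" using r_pos fa0 by simp
    have x: "x = min (a + ?w) 1" using False by (simp add: x_def qry_def)
    have ax: "a < x" using x w0 False e by simp
    have x1: "x \<le> 1" using x by simp
    have R': "Rng h'" using R a0 ax x1 by (auto simp: h'_def Rng_def)
    have nd: "\<not> dn (Probe a fa)" using False by (simp add: dn_def)
    show ?thesis
    proof (cases "f x \<le> fa + r * (1 + fa)")
      case True
      have s': "s' = Probe x (f x)" using True False by (simp add: s'_def tr_def)
      have cov: "Cov h' v" if "0 \<le> v" "v < x" for v
      proof (cases "v < a")
        case True thus ?thesis using C that Cov_app by (simp add: h'_def)
      next
        case False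
        have "f v \<le> f x" using f_mono False that a0 x1 by simp
        hence "f v \<le> th (f a)" using \<open>f x \<le> fa + r * (1 + fa)\<close> fa by (simp add: th_def)
        moreover have "v - a \<le> r / (1 + f a)" using x that fa by simp
        ultimately show ?thesis using cov_by[OF Kn_app[OF Ka]] False that a0 x1
          by (simp add: h'_def)
      qed
      have "Inv s' h'" unfolding s' Inv_def using R' a0 ax x1 cov Kn_new
        by (auto simp: h'_def)
      moreover have "dn s' \<or> Psi (Probe a fa) + 1 \<le> Psi s'"
      proof (cases "a + ?w \<le> 1")
        case True
        hence "x = a + r / (1 + f a)" using x fa by simp
        hence "Phi a + 1 \<le> Phi x" using Phi_wide a0 x1 by simp
        hence "(real B + 1) * (Phi a + 1) \<le> (real B + 1) * Phi x" by (simp add: mult_left_mono)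
        thus ?thesis unfolding s' Psi_def by (simp add: algebra_simps)
      next
        case False
        hence "x = 1" using x by simp
        thus ?thesis unfolding s' dn_def using e by simp
      qed
      ultimately show ?thesis using s' nd by simp
    next
      case ntrue: False
      have s': "s' = Bis a fa a x (f x) B" using ntrue False by (simp add: s'_def tr_def)
      have "x - a \<le> ?w" using x by simp
      also have "?w \<le> r" using r_pos fa0 by (simp add: field_simps)
      finally have xa: "x - a \<le> r" .
      have "Inv s' h'" unfolding s' Inv_def using R' a0 ax x1 False fa ntrue fa0 r_pos Ka Kn_app Kn_new
        C Cov_app B(1) xa x
        by (auto simp: h'_def th_def)
      moreover have "Psi (Probe a fa) + 1 \<le> Psi s'" unfolding s' Psi_def by simp
      ultimately show ?thesis using s' nd by simp
    qed
  qed
qed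

lemma step_Bis:
  assumes I: "Inv (Bis a fa lo hi fhi k) h"
  defines "x \<equiv> qry e r (Bis a fa lo hi fhi k)"
  defines "h' \<equiv> h @ [(x, F x, f x)]" and "s' \<equiv> tr e r B (Bis a fa lo hi fhi k) x (f x)"
  shows "Inv s' h' \<and> s' \<noteq> Init \<and> Psi (Bis a fa lo hi fhi k) + 1 \<le> Psi s'"
proof -
  from I have R: "Rng h" and a0: "0 \<le> a" and alo: "a \<le> lo" and lohi: "lo < hi" and hi1: "hi \<le> 1"
    and ae: "a < 1 - e" and fa: "fa = f a" and flo: "f lo \<le> th fa" and fhi: "fhi = f hi"
    and thhi: "th fa < fhi" and Ka: "Kn h a" and Klo: "Kn h lo" and Khi: "Kn h hi"
    and wa: "hi - a \<le> r / (1 + fa)" and wl: "hi - lo \<le> r / 2 ^ (B - k)" and k1: "1 \<le> k" and kB: "k \<le> B"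
    and C: "\<forall>v. 0 \<le> v \<and> v < a \<longrightarrow> Cov h v"
    by (auto simp: Inv_def)
  have x: "x = (lo + hi) / 2" by (simp add: x_def qry_def)
  have lox: "lo < x" "x < hi" using x lohi by auto
  have R': "Rng h'" using R a0 alo lox hi1 by (auto simp: h'_def Rng_def)
  have half: "hi - x \<le> r / 2 ^ (B - (k - 1))" "x - lo \<le> r / 2 ^ (B - (k - 1))"
  proof -
    have "(hi - lo) / 2 \<le> r / 2 ^ (B - k) / 2" using wl by simp
    also have "\<dots> = r / 2 ^ (B - (k - 1))" by (rule halve[OF k1 kB])
    finally have "(hi - lo) / 2 \<le> r / 2 ^ (B - (k - 1))" .
    moreover have "hi - x = (hi - lo) / 2" "x - lo = (hi - lo) / 2" using x by simp_all
    ultimately show "hi - x \<le> r / 2 ^ (B - (k - 1))" "x - lo \<le> r / 2 ^ (B - (k - 1))" by (simp only:)+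
  qed
  have Ka': "Kn h' a" and Klo': "Kn h' lo" and Khi': "Kn h' hi" and Kx': "Kn h' x"
    using Ka Klo Khi Kn_app Kn_new by (auto simp: h'_def)
  have C': "\<forall>v. 0 \<le> v \<and> v < a \<longrightarrow> Cov h' v" using C Cov_app by (simp add: h'_def)
  have covA: "Cov h' v" if "a \<le> v" "v \<le> lo'" "lo' \<le> hi" "f lo' \<le> th fa" for v lo'
  proof -
    have "f v \<le> f lo'" using f_mono that a0 hi1 by simp
    thus ?thesis using cov_by[OF Ka'] that a0 hi1 wa fa flo by simp
  qed
  have PsiB: "Psi (Bis a fa lo hi fhi k) = (real B + 1) * Phi a + (real B + 1 - real k)"
    by (simp add: Psi_def)
  show ?thesis
  proof (cases "f x \<le> fa + r * (1 + fa)")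
    case T: True
    show ?thesis
    proof (cases "k \<le> 1")
      case True
      have k: "k = 1" using True k1 by simp
      have s': "s' = Probe hi fhi" using T True by (simp add: s'_def tr_def)
      have "hi - x \<le> e" using half k small by simp
      hence cov: "Cov h' v" if "0 \<le> v" "v < hi" for v
        using that C' covA[of v x] lox T fa cov_near[OF Kx', of v] a0 alo
        by (cases "v < a"; cases "v \<le> x") (auto simp: th_def)
      have "Inv s' h'" unfolding s' Inv_def using R' a0 alo lox hi1 fhi Khi' cov by auto
      moreover have "Phi a + 1 \<le> Phi hi" using Phi_narrow[of a hi] a0 alo lox hi1 thhi fhi fa by simp
      hence "(real B + 1) * (Phi a + 1) \<le> (real B + 1) * Phi hi" by (simp add: mult_left_mono)
      hence "Psi (Bis a fa lo hi fhi k) + 1 \<le> Psi s'" unfolding s' PsiB k by (simp add: Psi_def algebra_simps)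
      ultimately show ?thesis using s' by simp
    next
      case False
      have s': "s' = Bis a fa x hi fhi (k - 1)" using T False by (simp add: s'_def tr_def)
      have "Inv s' h'" unfolding s' Inv_def using R' a0 alo lox hi1 ae fa T fhi thhi Ka' Kx' Khi' wa half
        False kB C' by (auto simp: th_def)
      moreover have "Psi (Bis a fa lo hi fhi k) + 1 \<le> Psi s'" unfolding s' PsiB using False
        by (simp add: Psi_def of_nat_diff)
      ultimately show ?thesis using s' by simp
    qed
  next
    case T: False
    show ?thesis
    proof (cases "k \<le> 1")
      case True
      have k: "k = 1" using True k1 by simp
      have s': "s' = Probe x (f x)" using T True by (simp add: s'_def tr_def)
      have "x - lo \<le> e" using half k small by simp
      hence cov: "Cov h' v" if "0 \<le> v" "v < x" for v
        using that C' covA[of v lo] lox flo cov_near[OF Klo', of v] a0 alo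
        by (cases "v < a"; cases "v \<le> lo") auto
      have "Inv s' h'" unfolding s' Inv_def using R' a0 alo lox hi1 Kx' cov by auto
      moreover have "Phi a + 1 \<le> Phi x" using Phi_narrow[of a x] a0 alo lox hi1 T fa by (simp add: th_def)
      hence "(real B + 1) * (Phi a + 1) \<le> (real B + 1) * Phi x" by (simp add: mult_left_mono)
      hence "Psi (Bis a fa lo hi fhi k) + 1 \<le> Psi s'" unfolding s' PsiB k by (simp add: Psi_def algebra_simps)
      ultimately show ?thesis using s' by simp
    next
      case False
      have s': "s' = Bis a fa lo x (f x) (k - 1)" using T False by (simp add: s'_def tr_def)
      have "Inv s' h'" unfolding s' Inv_def using R' a0 alo lox hi1 ae fa flo T Ka' Klo' Kx' wa half
        False kB C' by (auto simp: th_def)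
      moreover have "Psi (Bis a fa lo hi fhi k) + 1 \<le> Psi s'" unfolding s' PsiB using False
        by (simp add: Psi_def of_nat_diff)
      ultimately show ?thesis using s' by simp
    qed
  qed
qed

end



context alg begin

lemma main_run:
  "Inv (stof e r B (run (QQ e r B) F f n)) (run (QQ e r B) F f n) \<and>
   (1 \<le> n \<longrightarrow> stof e r B (run (QQ e r B) F f n) \<noteq> Init \<and>
      (dn (stof e r B (run (QQ e r B) F f n)) \<or> real n - 1 \<le> Psi (stof e r B (run (QQ e r B) F f n))))"
proof (induction n)
  case 0
  show ?case by (simp add: stof_def Inv_def Rng_def)
next
  case (Suc n)
  define s where "s = stof e r B (run (QQ e r B) F f n)"
  define x where "x = qry e r s"
  have H: "run (QQ e r B) F f (Suc n) = run (QQ e r B) F f n @ [(x, F x, f x)]"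
    unfolding run_Suc x_def s_def ..
  have S: "stof e r B (run (QQ e r B) F f n @ [(x, F x, f x)]) = tr e r B s x (f x)"
    unfolding stof_snoc s_def ..
  have I: "Inv s (run (QQ e r B) F f n)" using Suc.IH s_def by simp
  show ?case
  proof (cases s)
    case Init
    have n0: "n = 0" using Suc.IH Init s_def by (cases n) auto
    have st: "Inv (tr e r B s x (f x)) (run (QQ e r B) F f n @ [(x, F x, f x)]) \<and> tr e r B s x (f x) \<noteq> Init
      \<and> 0 \<le> Psi (tr e r B s x (f x))"
      using step_Init[OF I[unfolded Init]] unfolding Init x_def by blast
    have z: "real (Suc n) - 1 = 0" using n0 by simp
    show ?thesis using st unfolding H S z by blast
  next
    case (Probe a fa)
    have st: "Inv (tr e r B s x (f x)) (run (QQ e r B) F f n @ [(x, F x, f x)]) \<and> tr e r B s x (f x) \<noteq> Init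
      \<and> (dn s \<longrightarrow> dn (tr e r B s x (f x))) \<and> (\<not> dn s \<longrightarrow> dn (tr e r B s x (f x)) \<or> Psi s + 1 \<le> Psi (tr e r B s x (f x)))"
      using step_Probe[OF I[unfolded Probe]] unfolding Probe x_def by simp
    have "dn (tr e r B s x (f x)) \<or> real (Suc n) - 1 \<le> Psi (tr e r B s x (f x))"
    proof (cases "n = 0")
      case True
      have "s = Init" using True s_def by (simp add: stof_def)
      thus ?thesis using Probe by simp
    next
      case False
      hence "dn s \<or> real n - 1 \<le> Psi s" using Suc.IH s_def by simp
      thus ?thesis using st by auto
    qed
    thus ?thesis using st unfolding H S by simp
  next
    case (Bis a fa lo hi fhi k)
    have st: "Inv (tr e r B s x (f x)) (run (QQ e r B) F f n @ [(x, F x, f x)]) \<and> tr e r B s x (f x) \<noteq> Init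
      \<and> Psi s + 1 \<le> Psi (tr e r B s x (f x))"
      using step_Bis[OF I[unfolded Bis]] unfolding Bis x_def by simp
    have "dn (tr e r B s x (f x)) \<or> real (Suc n) - 1 \<le> Psi (tr e r B s x (f x))"
    proof (cases "n = 0")
      case True
      have "s = Init" using True s_def by (simp add: stof_def)
      thus ?thesis using Bis by simp
    next
      case False
      hence "dn s \<or> real n - 1 \<le> Psi s" using Suc.IH s_def by simp
      moreover have "\<not> dn s" using Bis by (simp add: dn_def)
      ultimately show ?thesis using st by auto
    qed
    thus ?thesis using st unfolding H S by simp
  qed
qed

lemma Psi_bound: "Inv s h \<Longrightarrow> s \<noteq> Init \<Longrightarrow> \<not> dn s \<Longrightarrow> Psi s \<le> (real B + 1) * (PB + 1)"
proof (cases s)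
  case (Probe a fa)
  assume "Inv s h" "\<not> dn s"
  hence "0 \<le> a" "a < 1 - e" using Probe by (auto simp: Inv_def dn_def)
  hence "Phi a \<le> PB + 1" using Phi_bound by fastforce
  thus ?thesis using Probe by (simp add: Psi_def mult_left_mono)
next
  case (Bis a fa lo hi fhi k)
  assume "Inv s h"
  hence "0 \<le> a" "a < 1 - e" "1 \<le> k" using Bis by (auto simp: Inv_def)
  hence "Phi a \<le> PB" using Phi_bound by fastforce
  hence "(real B + 1) * Phi a \<le> (real B + 1) * PB" by (simp add: mult_left_mono)
  thus ?thesis using Bis \<open>1 \<le> k\<close> by (simp add: Psi_def algebra_simps)
qed auto

lemma final:
  assumes n: "(real B + 1) * (2 / r + ln (1 + 1 / e) / ln (1 + r) + 1) < real n - 1"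
  shows "is_cdf (Gout (run (QQ e r B) F f n)) \<and> levy F (Gout (run (QQ e r B) F f n)) \<le> e"
proof -
  define h where "h = run (QQ e r B) F f n"
  define s where "s = stof e r B h"
  have PB0: "0 \<le> PB" unfolding PB_def using r_pos lnr e by simp
  have "0 \<le> (real B + 1) * (PB + 1)" using PB0 by simp
  hence n1: "1 \<le> n" using n unfolding PB_def by (cases n) auto
  have M: "Inv s h" "s \<noteq> Init" "dn s \<or> real n - 1 \<le> Psi s" using main_run[of n] n1 unfolding s_def h_def by auto
  have "dn s"
  proof (rule ccontr)
    assume "\<not> dn s"
    hence "Psi s \<le> (real B + 1) * (PB + 1)" using Psi_bound M by simp
    thus False using M \<open>\<not> dn s\<close> n unfolding PB_def by simp
  qed
  then obtain a fa where s: "s = Probe a fa" and a: "1 - e \<le> a" by (cases s) (auto simp: dn_def)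
  have R: "Rng h" and a0: "0 \<le> a" and a1: "a \<le> 1" and Ka: "Kn h a"
    and C: "\<forall>v. 0 \<le> v \<and> v < a \<longrightarrow> Cov h v"
    using M(1) unfolding s by (auto simp: Inv_def)
  have cov: "Cov h v" if "0 \<le> v" "v < 1" for v
  proof (cases "v < a")
    case True thus ?thesis using C that by simp
  next
    case False thus ?thesis using cov_near[OF Ka a0, of v] a that by simp
  qed
  have "levy F (Gout h) \<le> e"
    by (rule levy_ok[OF e(1)]) (use run_exact R cov in \<open>auto simp: h_def Rng_def Cov_def\<close>)
  thus ?thesis using Gout_cdf h_def by simp
qed

end



lemma ln2_bounds: "1/2 \<le> ln (2::real)" "ln (2::real) \<le> 1"
proof -
  have "ln (1/2::real) \<le> 1/2 - 1" by (rule ln_le_minus_one) simp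
  thus "1/2 \<le> ln (2::real)" by (simp add: ln_div)
  show "ln (2::real) \<le> 1" using ln_le_minus_one[of "2::real"] by simp
qed

lemma ln1p_lower: assumes "0 < r" "r \<le> (1::real)" shows "r / 2 \<le> ln (1 + r)"
proof -
  have "ln (1 / (1 + r)) \<le> 1 / (1 + r) - 1" by (rule ln_le_minus_one) (use assms in simp)
  hence "- ln (1 + r) \<le> 1 / (1 + r) - 1" using assms by (simp add: ln_div)
  moreover have "1 / (1 + r) - 1 = - (r / (1 + r))" using assms by (simp add: field_simps)
  moreover have "r / 2 \<le> r / (1 + r)" using assms by (intro divide_left_mono) auto
  ultimately show ?thesis by linarith
qed

lemma fin_eps:
  fixes \<epsilon> :: real
  assumes eps: "0 < \<epsilon>" "\<epsilon> < 1"
  shows "\<exists>(n::nat) (Q :: (real \<times> real \<times> real) list \<Rightarrow> real)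
        (A :: (real \<times> real \<times> real) list \<Rightarrow> (real \<Rightarrow> real)).
       real n \<le> 20 * \<epsilon> powr (-1/2) * (1 + ln (1/\<epsilon>)) ^ 2 \<and>
       (\<forall>F f. smooth_dist_01 F f \<and> convex_on {0..1} F \<longrightarrow>
          is_cdf (A (run Q F f n)) \<and> levy F (A (run Q F f n)) \<le> 1 * \<epsilon>)"
proof -
  define r where "r = sqrt \<epsilon>"
  define B where "B = nat \<lceil>log 2 (1/\<epsilon>)\<rceil> + 1"
  define K where "K = (real B + 1) * (2 / r + ln (1 + 1 / \<epsilon>) / ln (1 + r) + 1)"
  define n where "n = nat \<lceil>K\<rceil> + 2"
  define L where "L = ln (1/\<epsilon>)"
  define u where "u = \<epsilon> powr (-1/2)"
  have r0: "0 < r" "r \<le> 1" using eps by (auto simp: r_def)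
  have u: "u = 1 / r"
  proof -
    have "u = inverse (\<epsilon> powr (1/2))" unfolding u_def by (simp add: powr_minus[symmetric])
    also have "\<epsilon> powr (1/2) = r" unfolding r_def using eps by (simp add: powr_half_sqrt)
    finally show ?thesis by (simp add: divide_inverse)
  qed
  have u1: "1 \<le> u" using u r0 by simp
  have L0: "0 \<le> L" using eps by (simp add: L_def)
  have lg: "log 2 (1/\<epsilon>) = L / ln 2" unfolding L_def log_def by (rule refl)
  have lg0: "0 \<le> log 2 (1/\<epsilon>)" unfolding lg using L0 by simp
  have B1: "1 \<le> B" by (simp add: B_def)
  have B2: "1 / \<epsilon> \<le> 2 ^ B"
  proof -
    have "log 2 (1/\<epsilon>) \<le> real B" unfolding B_def by linarith
    hence "2 powr (log 2 (1/\<epsilon>)) \<le> 2 powr (real B)" by simp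
    moreover have "2 powr (log 2 (1/\<epsilon>)) = 1/\<epsilon>" using eps by (intro powr_log_cancel) auto
    moreover have "(2::real) powr (real B) = 2 ^ B" by (rule powr_realpow) simp
    ultimately show ?thesis by simp
  qed
  have lnr: "r / 2 \<le> ln (1 + r)" using ln1p_lower r0 by simp
  have lnr0: "0 < ln (1 + r)" using r0 by simp
  have K0: "0 \<le> K" unfolding K_def using r0 eps lnr0 by (intro mult_nonneg_nonneg add_nonneg_nonneg) auto
  have ck: "real (nat \<lceil>K\<rceil>) = of_int \<lceil>K\<rceil>" using K0 by simp
  have ck2: "of_int \<lceil>K\<rceil> - 1 < K" "K \<le> of_int \<lceil>K\<rceil>" using ceiling_correct[of K] by auto
  have rn: "real n = real (nat \<lceil>K\<rceil>) + 2" unfolding n_def by simp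
  have nK: "K < real n - 1" using rn ck ck2 by linarith
  have nK2: "real n \<le> K + 3" using rn ck ck2 by linarith
  have Bb: "real B + 1 \<le> 3 * (1 + L)"
  proof -
    have "real B \<le> log 2 (1/\<epsilon>) + 2" unfolding B_def using lg0 by linarith
    moreover have l2: "L / ln 2 \<le> L / (1/2)"
      using ln2_bounds(1) L0 by (intro divide_left_mono) auto
    hence "log 2 (1/\<epsilon>) \<le> 2 * L" using lg by simp
    ultimately show ?thesis using L0 by argo
  qed
  have lnb: "ln (1 + 1 / \<epsilon>) \<le> 1 + L"
  proof -
    have "1 + 1 / \<epsilon> \<le> 2 / \<epsilon>" using eps by (simp add: field_simps)
    hence "ln (1 + 1 / \<epsilon>) \<le> ln (2 / \<epsilon>)" using eps by simp
    also have "\<dots> = ln 2 + L" using eps by (simp add: L_def ln_div)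
    finally show ?thesis using ln2_bounds(2) by linarith
  qed
  have q: "ln (1 + 1 / \<epsilon>) / ln (1 + r) \<le> 2 * (1 + L) * u"
  proof -
    have "ln (1 + 1 / \<epsilon>) / ln (1 + r) \<le> (1 + L) / ln (1 + r)"
      using lnb lnr0 by (simp add: divide_right_mono)
    also have "\<dots> \<le> (1 + L) / (r / 2)" using lnr r0 L0 by (intro divide_left_mono) auto
    also have "\<dots> = 2 * (1 + L) * u" using u r0 by simp
    finally show ?thesis .
  qed
  have inner: "2 / r + ln (1 + 1 / \<epsilon>) / ln (1 + r) + 1 \<le> 5 * (1 + L) * u"
  proof -
    have "2 / r = 2 * u" using u by simp
    moreover have "2 * u \<le> 2 * (1 + L) * u" using L0 u1 by simp
    moreover have "1 * 1 \<le> (1 + L) * u" using L0 u1 by (intro mult_mono) auto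
    moreover have "5 * (1 + L) * u = 2 * ((1 + L) * u) + 2 * ((1 + L) * u) + (1 + L) * u"
      by (simp add: algebra_simps)
    moreover have "2 * (1 + L) * u = 2 * ((1 + L) * u)" by simp
    ultimately show ?thesis using q by linarith
  qed
  have in0: "0 \<le> 2 / r + ln (1 + 1 / \<epsilon>) / ln (1 + r) + 1" using r0 eps lnr0 by simp
  have "K \<le> (3 * (1 + L)) * (5 * (1 + L) * u)"
    unfolding K_def using Bb inner in0 by (intro mult_mono) auto
  moreover have "(3 * (1 + L)) * (5 * (1 + L) * u) = 15 * (1 + L)^2 * u"
    by (simp add: power2_eq_square algebra_simps)
  ultimately have K15: "K \<le> 15 * (1 + L)^2 * u" by (simp only:)
  have "1 \<le> (1 + L)^2" using L0 by (intro one_le_power) simp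
  hence "1 * 1 \<le> (1 + L)^2 * u" using u1 by (intro mult_mono) auto
  hence "real n \<le> 20 * (1 + L)^2 * u" using nK2 K15 by simp
  moreover have "20 * (1 + L)^2 * u = 20 * \<epsilon> powr (-1/2) * (1 + ln (1/\<epsilon>)) ^ 2"
    unfolding L_def u_def by (simp add: mult_ac)
  ultimately have bound: "real n \<le> 20 * \<epsilon> powr (-1/2) * (1 + ln (1/\<epsilon>)) ^ 2"
    by simp
  have good: "is_cdf (Gout (run (QQ \<epsilon> r B) F f n)) \<and> levy F (Gout (run (QQ \<epsilon> r B) F f n)) \<le> 1 * \<epsilon>"
    if "smooth_dist_01 F f" "convex_on {0..1} F" for F f
  proof -
    interpret alg F f \<epsilon> r B
      by unfold_locales (use that eps B1 B2 in \<open>auto simp: r_def\<close>)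
    show ?thesis using final nK unfolding K_def by simp
  qed
  show ?thesis using bound good by blast
qed


theorem theorem6:
  shows "\<exists>C > 0. \<exists>k::nat. \<exists>c > 0. \<forall>\<epsilon>::real. 0 < \<epsilon> \<and> \<epsilon> < 1 \<longrightarrow>
    (\<exists>(n::nat) (Q :: (real \<times> real \<times> real) list \<Rightarrow> real)
        (A :: (real \<times> real \<times> real) list \<Rightarrow> (real \<Rightarrow> real)).
       real n \<le> C * \<epsilon> powr (-1/2) * (1 + ln (1/\<epsilon>)) ^ k \<and>
       (\<forall>F f. smooth_dist_01 F f \<and> convex_on {0..1} F \<longrightarrow>
          is_cdf (A (run Q F f n)) \<and> levy F (A (run Q F f n)) \<le> c * \<epsilon>))"
proof -
  have "\<forall>\<epsilon>::real. 0 < \<epsilon> \<and> \<epsilon> < 1 \<longrightarrow>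
    (\<exists>(n::nat) (Q :: (real \<times> real \<times> real) list \<Rightarrow> real)
        (A :: (real \<times> real \<times> real) list \<Rightarrow> (real \<Rightarrow> real)).
       real n \<le> 20 * \<epsilon> powr (-1/2) * (1 + ln (1/\<epsilon>)) ^ 2 \<and>
       (\<forall>F f. smooth_dist_01 F f \<and> convex_on {0..1} F \<longrightarrow>
          is_cdf (A (run Q F f n)) \<and> levy F (A (run Q F f n)) \<le> 1 * \<epsilon>))"
    using fin_eps by blast
  hence "\<exists>k::nat. \<exists>c > 0. \<forall>\<epsilon>::real. 0 < \<epsilon> \<and> \<epsilon> < 1 \<longrightarrow>
    (\<exists>(n::nat) (Q :: (real \<times> real \<times> real) list \<Rightarrow> real)
        (A :: (real \<times> real \<times> real) list \<Rightarrow> (real \<Rightarrow> real)).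
       real n \<le> 20 * \<epsilon> powr (-1/2) * (1 + ln (1/\<epsilon>)) ^ k \<and>
       (\<forall>F f. smooth_dist_01 F f \<and> convex_on {0..1} F \<longrightarrow>
          is_cdf (A (run Q F f n)) \<and> levy F (A (run Q F f n)) \<le> c * \<epsilon>))"
    by (intro exI[where x = "2::nat"] exI[where x = "1::real"]) simp
  thus ?thesis by (intro exI[where x = "20::real"]) simp
qed

end
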